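(* Let $(\Gamma,\rho)$ be a voltage graph with $\Gamma=(V,E)$ a rooted simple digraph on $V=\{v_1,\dots,v_N\}$ and voltage group $G$ a point group in dimension $k$, such that $G_i=G_i^*$ for some (and hence any) root $v_i$ of $\Gamma$. Let $V=\bigsqcup_{l=1}^m V_l$ be the $(\Gamma,\rho)$-adapted partition. Then: (1) Fix a vertex $v_i$. Two vertices $v_j,v_k$ lie in the same subset $V_l$ if and only if $\mathrm{Net}(v_i,v_j)=\mathrm{Net}(v_i,v_k)$. In particular $m=|\mathrm{Net}(v_i,V)|/|G_i|\le |G|/|G_i|$, with equality if and only if $(\Gamma,\rho)$ is nondegenerate. (2) Let $p(t)=(x_1(t),\dots,x_N(t))$ be a trajectory of the $G$-clustering dynamics $\dot x_i=\sum_{v_j\in\mathcal{N}^-(v_i)}a_{ij}(\rho(e_{ij})x_j-x_i)$ (with constants $a_{ij}>0$, $x_i\in\mathbb{R}^k$) converging to $p^*=(x_1^*,\dots,x_N^* )$. Then $x_i^*=x_j^*$ whenever $v_i$ and $v_j$ lie in the same subset $V_l$.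
   Context: Digraphs are simple; $e_{ij}$ denotes the edge $v_i\to v_j$; $\mathcal{N}^-(v_i)=\{v_j:e_{ij}\in E\}$. A voltage graph is $(\Gamma,\rho)$ with $\rho:E\to G$, $G$ finite with identity $\mathbf{1}$; a point group in dimension $k$ is a finite subgroup of $\mathrm{O}(k)$. A semi-walk is $w=v_{i_1}a_1\dots a_{n-1}v_{i_n}$ with each $a_j\in\{e_{i_ji_{j+1}},e_{i_{j+1}i_j}\}$; it is closed if $v_{i_1}=v_{i_n}$, a walk if every $a_j=e_{i_ji_{j+1}}$; a path is a walk with distinct vertices. Net voltage: $f(w)=\bar\rho(a_1)\cdots\bar\rho(a_{n-1})$ with $\bar\rho(a_j)=\rho(a_j)$ for forward edges and $\rho(a_j)^{-1}$ for backward ones ($f=\mathbf 1$ on a single vertex). $G_i$ (local group) is the set of $f(w)$ over closed semi-walks at $v_i$; $G_i^*$ (directed local group) is the set of $f(w)$ over closed walks at $v_i$. $\mathrm{Net}(v_i,v_j)=\{f(w): w$ a semi-walk from $v_i$ to $v_j\}$, $\mathrm{Net}(v_i,V)=\bigcup_{v_j\in V}\mathrm{Net}(v_i,v_j)$. $\Gamma$ is weakly connected if any two vertices are joined by a semi-walk; $(\Gamma,\rho)$ (weakly connected) is nondegenerate if $\mathrm{Net}(v_i,V)=G$ for some vertex $v_i$. $\Gamma$ is rooted if some vertex (a root) is reachable by a path from every vertex. The $(\Gamma,\rho)$-adapted partition of $V$ is the partition into equivalence classes where $v_i\sim v_j$ iff there is a semi-walk $w$ from $v_i$ to $v_j$ with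 $f(w)=\mathbf 1$. *)

theory Defs
  imports "HOL-Analysis.Analysis"
begin

definition point_group :: "(real^'k^'k) set \<Rightarrow> bool" where
  "point_group G \<longleftrightarrow> finite G \<and> G \<subseteq> {A. orthogonal_matrix A} \<and> mat 1 \<in> G \<and>
     (\<forall>A\<in>G. \<forall>B\<in>G. A ** B \<in> G) \<and> (\<forall>A\<in>G. matrix_inv A \<in> G)"

text \<open>Simple digraph on a finite vertex set V: edges are ordered pairs (i,j) meaning
v_i -> v_j, no loops.\<close>
definition simple_digraph :: "'v set \<Rightarrow> ('v \<times> 'v) set \<Rightarrow> bool" where
  "simple_digraph V E \<longleftrightarrow> finite V \<and> E \<subseteq> V \<times> V \<and> (\<forall>v. (v, v) \<notin> E)"

definition voltage_graph ::
  "'v set \<Rightarrow> ('v \<times> 'v) set \<Rightarrow> ('v \<times> 'v \<Rightarrow> 'g) \<Rightarrow> 'g set \<Rightarrow> bool" where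
  "voltage_graph V E \<rho> G \<longleftrightarrow> simple_digraph V E \<and> \<rho> ` E \<subseteq> G"

inductive semiwalk_net ::
  "'v set \<Rightarrow> ('v \<times> 'v) set \<Rightarrow> ('v \<times> 'v \<Rightarrow> real^'k^'k) \<Rightarrow> 'v \<Rightarrow> 'v \<Rightarrow> real^'k^'k \<Rightarrow> bool"
  for V E \<rho> where
  sw_nil: "i \<in> V \<Longrightarrow> semiwalk_net V E \<rho> i i (mat 1)"
| sw_fwd: "semiwalk_net V E \<rho> i j g \<Longrightarrow> (j, k) \<in> E \<Longrightarrow> semiwalk_net V E \<rho> i k (g ** \<rho> (j, k))"
| sw_bwd: "semiwalk_net V E \<rho> i j g \<Longrightarrow> (k, j) \<in> E \<Longrightarrow>
            semiwalk_net V E \<rho> i k (g ** matrix_inv (\<rho> (k, j)))"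

inductive walk_net ::
  "'v set \<Rightarrow> ('v \<times> 'v) set \<Rightarrow> ('v \<times> 'v \<Rightarrow> real^'k^'k) \<Rightarrow> 'v \<Rightarrow> 'v \<Rightarrow> real^'k^'k \<Rightarrow> bool"
  for V E \<rho> where
  w_nil: "i \<in> V \<Longrightarrow> walk_net V E \<rho> i i (mat 1)"
| w_fwd: "walk_net V E \<rho> i j g \<Longrightarrow> (j, k) \<in> E \<Longrightarrow> walk_net V E \<rho> i k (g ** \<rho> (j, k))"

definition local_group where
  "local_group V E \<rho> i = {g. semiwalk_net V E \<rho> i i g}"

definition directed_local_group where
  "directed_local_group V E \<rho> i = {g. walk_net V E \<rho> i i g}"

definition Net where
  "Net V E \<rho> i j = {g. semiwalk_net V E \<rho> i j g}"

definition NetV where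
  "NetV V E \<rho> i = (\<Union>j\<in>V. Net V E \<rho> i j)"

definition nondegenerate where
  "nondegenerate V E \<rho> G \<longleftrightarrow> (\<exists>i\<in>V. NetV V E \<rho> i = G)"

definition is_root :: "'v set \<Rightarrow> ('v \<times> 'v) set \<Rightarrow> 'v \<Rightarrow> bool" where
  "is_root V E r \<longleftrightarrow> r \<in> V \<and> (\<forall>v\<in>V. (v, r) \<in> E\<^sup>*)"

definition rooted :: "'v set \<Rightarrow> ('v \<times> 'v) set \<Rightarrow> bool" where
  "rooted V E \<longleftrightarrow> (\<exists>r. is_root V E r)"

definition adapted_rel where
  "adapted_rel V E \<rho> = {(i, j). i \<in> V \<and> j \<in> V \<and> semiwalk_net V E \<rho> i j (mat 1)}"

definition adapted_partition where
  "adapted_partition V E \<rho> = V // adapted_rel V E \<rho>"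

end

theory Submission imports Defs begin

lemma orth_inv: assumes "orthogonal_matrix (A::real^'n^'n)" shows "matrix_inv A = transpose A"
proof -
  have ex: "A ** transpose A = mat 1 \<and> transpose A ** A = mat 1" using assms orthogonal_matrix_def by auto
  hence "A ** matrix_inv A = mat 1 \<and> matrix_inv A ** A = mat 1" unfolding matrix_inv_def by (rule someI)
  hence "transpose A ** (A ** matrix_inv A) = transpose A" by simp
  thus ?thesis using ex by (simp add: matrix_mul_assoc)
qed

lemma orth_tt: "orthogonal_matrix (A::real^'n^'n) \<Longrightarrow> transpose A ** A = mat 1"
  by (simp add: orthogonal_matrix_def)
lemma orth_tt2: "orthogonal_matrix (A::real^'n^'n) \<Longrightarrow> A ** transpose A = mat 1"
  by (simp add: orthogonal_matrix_def)

locale VG =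
  fixes V :: "'v set" and E :: "('v \<times> 'v) set" and \<rho> :: "'v \<times> 'v \<Rightarrow> real^'k^'k"
    and G :: "(real^'k^'k) set"
  assumes vg: "voltage_graph V E \<rho> G" and pg: "point_group G"
begin

abbreviation sw where "sw \<equiv> semiwalk_net V E \<rho>"

lemma E_sub: "E \<subseteq> V \<times> V" using vg unfolding voltage_graph_def simple_digraph_def by auto
lemma finV: "finite V" using vg unfolding voltage_graph_def simple_digraph_def by auto
lemma finG: "finite G" using pg unfolding point_group_def by auto
lemma rhoG: "e \<in> E \<Longrightarrow> \<rho> e \<in> G" using vg unfolding voltage_graph_def by auto
lemma G_orth: "g \<in> G \<Longrightarrow> orthogonal_matrix g" using pg unfolding point_group_def by auto
lemma G_mul: "g \<in> G \<Longrightarrow> h \<in> G \<Longrightarrow> g ** h \<in> G" using pg unfolding point_group_def by auto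
lemma G_inv: "g \<in> G \<Longrightarrow> matrix_inv g \<in> G" using pg unfolding point_group_def by auto
lemma G_1: "mat 1 \<in> G" using pg unfolding point_group_def by auto

lemma sw_G: "sw i j g \<Longrightarrow> g \<in> G"
  by (induction rule: semiwalk_net.induct) (auto intro: G_1 G_mul G_inv rhoG)

lemma sw_orth: "sw i j g \<Longrightarrow> orthogonal_matrix g" using sw_G G_orth by blast

lemma sw_V: "sw i j g \<Longrightarrow> i \<in> V \<and> j \<in> V"
  by (induction rule: semiwalk_net.induct) (use E_sub in auto)

lemma sw_app: "sw j k h \<Longrightarrow> sw i j g \<Longrightarrow> sw i k (g ** h)"
proof (induction rule: semiwalk_net.induct)
  case (sw_nil i) then show ?case by simp
next
  case (sw_fwd i j g k) then show ?case
    by (metis matrix_mul_assoc semiwalk_net.sw_fwd)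
next
  case (sw_bwd i j g k) then show ?case
    by (metis matrix_mul_assoc semiwalk_net.sw_bwd)
qed

lemma sw_rev: "sw i j g \<Longrightarrow> sw j i (transpose g)"
proof (induction rule: semiwalk_net.induct)
  case (sw_nil i) then show ?case by (simp add: semiwalk_net.sw_nil)
next
  case (sw_fwd i j g k)
  have kV: "k \<in> V" using sw_fwd E_sub by auto
  have "sw k j (mat 1 ** matrix_inv (\<rho> (j, k)))"
    by (rule semiwalk_net.sw_bwd[OF semiwalk_net.sw_nil[OF kV] sw_fwd(2)])
  moreover have "matrix_inv (\<rho> (j,k)) = transpose (\<rho> (j,k))"
    by (rule orth_inv[OF G_orth[OF rhoG[OF sw_fwd(2)]]])
  ultimately have "sw k j (transpose (\<rho> (j,k)))" by simp
  from sw_app[OF sw_fwd(3) this] show ?case by (simp add: matrix_transpose_mul)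
next
  case (sw_bwd i j g k)
  have kV: "k \<in> V" using sw_bwd E_sub by auto
  have "sw k j (mat 1 ** (\<rho> (k, j)))"
    by (rule semiwalk_net.sw_fwd[OF semiwalk_net.sw_nil[OF kV] sw_bwd(2)])
  moreover have "matrix_inv (\<rho> (k,j)) = transpose (\<rho> (k,j))"
    by (rule orth_inv[OF G_orth[OF rhoG[OF sw_bwd(2)]]])
  ultimately show ?case using sw_app[OF sw_bwd(3)]
    by (simp add: matrix_transpose_mul)
qed

lemma walk_sw: "walk_net V E \<rho> i j g \<Longrightarrow> sw i j g"
  by (induction rule: walk_net.induct) (auto intro: semiwalk_net.intros)

lemma rtr_walk: "(v, r) \<in> E\<^sup>* \<Longrightarrow> v \<in> V \<Longrightarrow> \<exists>g. walk_net V E \<rho> v r g"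
proof (induction rule: rtrancl_induct)
  case base then show ?case by (auto intro: walk_net.intros)
next
  case (step y z) then show ?case by (auto intro: walk_net.intros)
qed


lemma conn: assumes "rooted V E" "i \<in> V" "j \<in> V" shows "\<exists>g. sw i j g"
proof -
  obtain r where r: "is_root V E r" using assms(1) unfolding rooted_def by auto
  obtain g where g: "walk_net V E \<rho> i r g" using rtr_walk r assms(2) unfolding is_root_def by blast
  obtain h where h: "walk_net V E \<rho> j r h" using rtr_walk r assms(3) unfolding is_root_def by blast
  show ?thesis using sw_app[OF sw_rev[OF walk_sw[OF h]] walk_sw[OF g]] by blast
qed

lemma sw_cancel: "sw i j g \<Longrightarrow> sw i k g \<Longrightarrow> sw j k (mat 1)"
proof -
  assume a: "sw i j g" "sw i k g"
  have "sw j k (transpose g ** g)" by (rule sw_app[OF a(2) sw_rev[OF a(1)]])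
  thus ?thesis using orth_tt[OF sw_orth[OF a(1)]] by simp
qed

lemma net_eq: assumes "rooted V E" "i \<in> V" "j \<in> V" "k \<in> V"
  shows "Net V E \<rho> i j = Net V E \<rho> i k \<longleftrightarrow> sw j k (mat 1)"
proof
  assume eq: "Net V E \<rho> i j = Net V E \<rho> i k"
  obtain g where g: "sw i j g" using conn assms by blast
  hence "sw i k g" using eq unfolding Net_def by auto
  thus "sw j k (mat 1)" using sw_cancel g by blast
next
  assume jk: "sw j k (mat 1)"
  hence kj: "sw k j (mat 1)" using sw_rev by fastforce
  show "Net V E \<rho> i j = Net V E \<rho> i k" unfolding Net_def
  proof (intro Collect_cong iffI)
    fix g assume "sw i j g" thus "sw i k g" using sw_app[OF jk] by fastforce
  next
    fix g assume "sw i k g" thus "sw i j g" using sw_app[OF kj] by fastforce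
  qed
qed

lemma equiv_rel: "equiv V (adapted_rel V E \<rho>)"
proof -
  have 1: "sw i i (mat 1)" if "i \<in> V" for i using semiwalk_net.sw_nil that .
  have 2: "sw j i (mat 1)" if "sw i j (mat 1)" for i j using sw_rev[OF that] by simp
  have 3: "sw i k (mat 1)" if "sw i j (mat 1)" "sw j k (mat 1)" for i j k
    using sw_app[OF that(2) that(1)] by simp
  show ?thesis
    unfolding equiv_def refl_on_def sym_def trans_def adapted_rel_def
    using 1 2 3 by blast
qed

lemma part_iff: assumes "j \<in> V" "k \<in> V"
  shows "(\<exists>P\<in>adapted_partition V E \<rho>. j \<in> P \<and> k \<in> P) \<longleftrightarrow> sw j k (mat 1)"
proof -
  have "(\<exists>P\<in>adapted_partition V E \<rho>. j \<in> P \<and> k \<in> P) \<longleftrightarrow> (j,k) \<in> adapted_rel V E \<rho>"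
  proof
    assume "\<exists>P\<in>adapted_partition V E \<rho>. j \<in> P \<and> k \<in> P"
    then obtain x where x: "x \<in> V" "j \<in> adapted_rel V E \<rho> `` {x}" "k \<in> adapted_rel V E \<rho> `` {x}"
      unfolding adapted_partition_def by (auto elim: quotientE)
    hence "(x,j) \<in> adapted_rel V E \<rho>" "(x,k) \<in> adapted_rel V E \<rho>" by auto
    thus "(j,k) \<in> adapted_rel V E \<rho>" using equiv_rel unfolding equiv_def sym_def trans_def by blast
  next
    assume jk: "(j,k) \<in> adapted_rel V E \<rho>"
    have "adapted_rel V E \<rho> `` {j} \<in> adapted_partition V E \<rho>"
      unfolding adapted_partition_def using assms(1) by (rule quotientI)
    moreover have "j \<in> adapted_rel V E \<rho> `` {j}" using equiv_class_self[OF equiv_rel assms(1)] .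
    moreover have "k \<in> adapted_rel V E \<rho> `` {j}" using jk by auto
    ultimately show "\<exists>P\<in>adapted_partition V E \<rho>. j \<in> P \<and> k \<in> P" by blast
  qed
  thus ?thesis unfolding adapted_rel_def using assms by auto
qed


lemma inj_rmul: "orthogonal_matrix (g::real^'k^'k) \<Longrightarrow> inj (\<lambda>x. x ** g)"
proof (rule injI)
  fix x y assume o: "orthogonal_matrix g" and "x ** g = y ** g"
  hence "x ** g ** transpose g = y ** g ** transpose g" by simp
  thus "x = y" using orth_tt2[OF o] by (simp add: matrix_mul_assoc[symmetric])
qed

lemma inj_lmul: "orthogonal_matrix (g::real^'k^'k) \<Longrightarrow> inj (\<lambda>x. g ** x)"
proof (rule injI)
  fix x y assume o: "orthogonal_matrix g" and "g ** x = g ** y"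
  hence "transpose g ** (g ** x) = transpose g ** (g ** y)" by simp
  thus "x = y" using orth_tt[OF o] by (simp add: matrix_mul_assoc)
qed

lemma Net_G: "Net V E \<rho> i j \<subseteq> G" unfolding Net_def using sw_G by auto
lemma NetV_G: "NetV V E \<rho> i \<subseteq> G" unfolding NetV_def using Net_G by auto
lemma LG_G: "local_group V E \<rho> i \<subseteq> G" unfolding local_group_def using sw_G by auto
lemma finNet: "finite (Net V E \<rho> i j)" using Net_G finG finite_subset by blast
lemma finLG: "finite (local_group V E \<rho> i)" using LG_G finG finite_subset by blast
lemma finNetV: "finite (NetV V E \<rho> i)" using NetV_G finG finite_subset by blast
lemma LG_pos: "i \<in> V \<Longrightarrow> card (local_group V E \<rho> i) > 0"
proof -
  assume "i \<in> V"
  hence "mat 1 \<in> local_group V E \<rho> i" unfolding local_group_def by (auto intro: semiwalk_net.sw_nil)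
  thus ?thesis using finLG card_gt_0_iff by blast
qed

lemma card_Net: assumes "rooted V E" "i \<in> V" "j \<in> V"
  shows "card (Net V E \<rho> i j) = card (local_group V E \<rho> i)"
proof -
  obtain g where g: "sw i j g" using conn assms by blast
  have "Net V E \<rho> i j = (\<lambda>x. x ** g) ` local_group V E \<rho> i"
  proof
    show "(\<lambda>x. x ** g) ` local_group V E \<rho> i \<subseteq> Net V E \<rho> i j"
      unfolding local_group_def Net_def using sw_app[OF g] by auto
  next
    show "Net V E \<rho> i j \<subseteq> (\<lambda>x. x ** g) ` local_group V E \<rho> i"
    proof
      fix h assume "h \<in> Net V E \<rho> i j"
      hence h: "sw i j h" unfolding Net_def by auto
      have "sw i i (h ** transpose g)" by (rule sw_app[OF sw_rev[OF g] h])
      moreover have "h = (h ** transpose g) ** g"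
        using orth_tt[OF sw_orth[OF g]] by (simp add: matrix_mul_assoc[symmetric])
      ultimately show "h \<in> (\<lambda>x. x ** g) ` local_group V E \<rho> i"
        unfolding local_group_def by blast
    qed
  qed
  thus ?thesis using card_image inj_rmul[OF sw_orth[OF g]] by (metis inj_on_subset subset_UNIV)
qed

lemma card_kernel:
  assumes "\<forall>j\<in>V. \<forall>k\<in>V. f j = f k \<longleftrightarrow> g j = g k"
  shows "card (f ` V) = card (g ` V)"
proof -
  define \<phi> where "\<phi> B = f (inv_into V g B)" for B
  have a: "inv_into V g (g j) \<in> V \<and> g (inv_into V g (g j)) = g j" if "j \<in> V" for j
    using that by (simp add: inv_into_into f_inv_into_f)
  have img: "\<phi> ` (g ` V) = f ` V"
  proof -
    have "\<phi> (g j) = f j" if "j \<in> V" for j using a[OF that] assms that unfolding \<phi>_def by blast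
    thus ?thesis by (auto simp: image_iff)
  qed
  have "inj_on \<phi> (g ` V)"
  proof (rule inj_onI)
    fix x y assume "x \<in> g ` V" "y \<in> g ` V" "\<phi> x = \<phi> y"
    then obtain j k where "j \<in> V" "k \<in> V" "x = g j" "y = g k" "\<phi> (g j) = \<phi> (g k)" by auto
    thus "x = y" using a assms unfolding \<phi>_def by metis
  qed
  thus ?thesis using img card_image by metis
qed

lemma card_NetV: assumes "rooted V E" "i \<in> V"
  shows "card (NetV V E \<rho> i) = card (adapted_partition V E \<rho>) * card (local_group V E \<rho> i)"
proof -
  define F where "F = Net V E \<rho> i ` V"
  have U: "NetV V E \<rho> i = \<Union>F" unfolding NetV_def F_def by auto
  have pw: "pairwise disjnt F"
  proof (rule pairwiseI)
    fix A B assume "A \<in> F" "B \<in> F" "A \<noteq> B"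
    then obtain j k where jk: "j \<in> V" "k \<in> V" "A = Net V E \<rho> i j" "B = Net V E \<rho> i k" "A \<noteq> B"
      unfolding F_def by auto
    show "disjnt A B"
    proof (rule ccontr)
      assume "\<not> disjnt A B"
      then obtain g where "g \<in> A" "g \<in> B" unfolding disjnt_def by auto
      hence "sw j k (mat 1)" using sw_cancel jk unfolding Net_def by auto
      thus False using net_eq[OF assms jk(1,2)] jk by auto
    qed
  qed
  have "card (\<Union>F) = sum card F" by (rule card_Union_disjoint[OF pw]) (auto simp: F_def finNet)
  also have "\<dots> = sum (\<lambda>_. card (local_group V E \<rho> i)) F"
    by (rule sum.cong) (auto simp: F_def card_Net[OF assms])
  also have "\<dots> = card F * card (local_group V E \<rho> i)" by simp
  also have "card F = card (adapted_partition V E \<rho>)"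
  proof -
    have q: "adapted_partition V E \<rho> = (\<lambda>j. adapted_rel V E \<rho> `` {j}) ` V"
      unfolding adapted_partition_def quotient_def by auto
    have "\<forall>j\<in>V. \<forall>k\<in>V. Net V E \<rho> i j = Net V E \<rho> i k \<longleftrightarrow>
        adapted_rel V E \<rho> `` {j} = adapted_rel V E \<rho> `` {k}"
      using net_eq[OF assms] eq_equiv_class_iff[OF equiv_rel] unfolding adapted_rel_def by auto
    thus ?thesis unfolding F_def q by (rule card_kernel)
  qed
  finally show ?thesis using U by simp
qed

lemma card_NetV_eq: assumes "rooted V E" "i \<in> V" "i' \<in> V"
  shows "card (NetV V E \<rho> i') = card (NetV V E \<rho> i)"
proof -
  obtain g where g: "sw i' i g" using conn assms by blast
  have "NetV V E \<rho> i' = (\<lambda>x. g ** x) ` NetV V E \<rho> i"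
  proof
    show "(\<lambda>x. g ** x) ` NetV V E \<rho> i \<subseteq> NetV V E \<rho> i'"
      unfolding NetV_def Net_def using sw_app[OF _ g] by blast
  next
    show "NetV V E \<rho> i' \<subseteq> (\<lambda>x. g ** x) ` NetV V E \<rho> i"
    proof
      fix h assume "h \<in> NetV V E \<rho> i'"
      then obtain j where j: "j \<in> V" "sw i' j h" unfolding NetV_def Net_def by auto
      have "sw i j (transpose g ** h)" by (rule sw_app[OF j(2) sw_rev[OF g]])
      moreover have "h = g ** (transpose g ** h)"
        using orth_tt2[OF sw_orth[OF g]] by (simp add: matrix_mul_assoc)
      ultimately show "h \<in> (\<lambda>x. g ** x) ` NetV V E \<rho> i"
        unfolding NetV_def Net_def using j(1) by blast
    qed
  qed
  thus ?thesis using card_image inj_lmul[OF sw_orth[OF g]] by (metis inj_on_subset subset_UNIV)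
qed


lemma max_principle:
  fixes a :: "'v \<times> 'v \<Rightarrow> real" and xs :: "'v \<Rightarrow> real^'k" and d :: "real^'k"
  assumes r: "is_root V E r" and loc: "local_group V E \<rho> r = directed_local_group V E \<rho> r"
    and apos: "\<forall>e\<in>E. a e > 0"
    and eqm: "\<forall>j\<in>V. (\<Sum>k\<in>{k. (j, k) \<in> E}. a (j, k) *\<^sub>R (\<rho> (j, k) *v xs k - xs j)) = 0"
    and sw0: "sw r j0 g0"
  shows "d \<bullet> (g0 *v xs j0) \<le> d \<bullet> xs r"
proof -
  define u where "u j g = d \<bullet> (g *v xs j)" for j g
  define S where "S = {(j,g). sw r j g}"
  have rV: "r \<in> V" using r unfolding is_root_def by auto
  have "S \<subseteq> V \<times> G" using sw_V sw_G by (auto simp: S_def)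
  hence finS: "finite S" using finite_subset finV finG by blast
  have rS: "(r, mat 1) \<in> S" unfolding S_def using rV by (auto intro: semiwalk_net.sw_nil)
  define M where "M = Max ((\<lambda>(j,g). u j g) ` S)"
  have le: "u j g \<le> M" if "sw r j g" for j g
    unfolding M_def using finS that by (intro Max_ge) (auto simp: S_def)
  obtain j1 g1 where j1: "sw r j1 g1" "u j1 g1 = M"
  proof -
    have "M \<in> (\<lambda>(j,g). u j g) ` S" unfolding M_def using finS rS by (intro Max_in) auto
    thus ?thesis using that unfolding S_def by auto
  qed
  have step: "u k (g ** \<rho> (j, k)) = M" if sj: "sw r j g" and uj: "u j g = M" and e: "(j, k) \<in> E" for j g k
  proof -
    define N where "N = {k. (j, k) \<in> E}"
    have jV: "j \<in> V" using sw_V[OF sj] by auto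
    have finN: "finite N" unfolding N_def using finite_subset[of N V] finV E_sub by (auto simp: N_def)
    have "g *v (\<Sum>k\<in>N. a (j, k) *\<^sub>R (\<rho> (j, k) *v xs k - xs j)) = 0"
      using eqm jV unfolding N_def by simp
    hence "(\<Sum>k\<in>N. a (j, k) *\<^sub>R (g *v (\<rho> (j, k) *v xs k) - g *v xs j)) = 0"
      by (simp add: linear_sum[OF matrix_vector_mul_linear] o_def matrix_vector_mult_scaleR
           matrix_vector_mult_diff_distrib)
    hence "d \<bullet> (\<Sum>k\<in>N. a (j, k) *\<^sub>R (g *v (\<rho> (j, k) *v xs k) - g *v xs j)) = 0" by simp
    hence "(\<Sum>k\<in>N. a (j, k) * (u k (g ** \<rho> (j, k)) - u j g)) = 0"
      unfolding u_def by (simp add: inner_sum_right inner_diff_right matrix_vector_mul_assoc)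
    moreover have "(\<Sum>k\<in>N. a (j, k) * (M - u k (g ** \<rho> (j, k)))) =
        (\<Sum>k\<in>N. - (a (j, k) * (u k (g ** \<rho> (j, k)) - u j g)))"
      using uj by (intro sum.cong) (auto simp: algebra_simps)
    ultimately have s0: "(\<Sum>k\<in>N. a (j, k) * (M - u k (g ** \<rho> (j, k)))) = 0"
      by (simp add: sum_negf)
    have nn: "\<forall>k\<in>N. 0 \<le> a (j, k) * (M - u k (g ** \<rho> (j, k)))"
    proof
      fix k assume "k \<in> N"
      hence "(j,k) \<in> E" by (simp add: N_def)
      hence "sw r k (g ** \<rho> (j, k))" "a (j,k) > 0" using semiwalk_net.sw_fwd[OF sj] apos by auto
      thus "0 \<le> a (j, k) * (M - u k (g ** \<rho> (j, k)))" using le by auto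
    qed
    have "a (j, k) * (M - u k (g ** \<rho> (j, k))) = 0"
    proof -
      define f where "f x = a (j, x) * (M - u x (g ** \<rho> (j, x)))" for x
      have "sum f N = 0 \<longleftrightarrow> (\<forall>x\<in>N. f x = 0)"
        by (rule sum_nonneg_eq_0_iff[OF finN]) (use nn in \<open>simp add: f_def\<close>)
      hence "\<forall>x\<in>N. f x = 0" using s0 unfolding f_def by simp
      hence "\<forall>x\<in>N. a (j, x) * (M - u x (g ** \<rho> (j, x))) = 0" unfolding f_def .
      moreover have "k \<in> N" using e by (simp add: N_def)
      ultimately show ?thesis by blast
    qed
    thus ?thesis using apos e by auto
  qed
  have walk: "walk_net V E \<rho> i k w \<Longrightarrow> (\<And>g. sw r i g \<Longrightarrow> u i g = M \<Longrightarrow> sw r k (g ** w) \<and> u k (g ** w) = M)" for i k w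
  proof (induction rule: walk_net.induct)
    case (w_nil i) then show ?case by simp
  next
    case (w_fwd i j w k)
    from w_fwd.IH[OF w_fwd.prems] have "sw r j (g ** w)" "u j (g ** w) = M" by auto
    from semiwalk_net.sw_fwd[OF this(1) w_fwd(2)] step[OF this w_fwd(2)]
    show ?case by (simp add: matrix_mul_assoc)
  qed
  have "j1 \<in> V" using sw_V[OF j1(1)] by auto
  then obtain w where w: "walk_net V E \<rho> j1 r w" using rtr_walk r unfolding is_root_def by blast
  from walk[OF w j1] have h: "sw r r (g1 ** w)" "u r (g1 ** w) = M" by auto
  have "transpose (g1 ** w) \<in> directed_local_group V E \<rho> r"
    using loc sw_rev[OF h(1)] unfolding local_group_def by auto
  hence w2: "walk_net V E \<rho> r r (transpose (g1 ** w))" unfolding directed_local_group_def by auto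
  from walk[OF w2 h] have "u r ((g1 ** w) ** transpose (g1 ** w)) = M" by auto
  hence "u r (mat 1) = M" using orth_tt2[OF sw_orth[OF h(1)]] by simp
  hence "M = d \<bullet> xs r" unfolding u_def by simp
  thus ?thesis using le[OF sw0] unfolding u_def by simp
qed

lemma equil_eq:
  fixes a :: "'v \<times> 'v \<Rightarrow> real" and xs :: "'v \<Rightarrow> real^'k"
  assumes rt: "rooted V E" and r: "is_root V E r" and loc: "local_group V E \<rho> r = directed_local_group V E \<rho> r"
    and apos: "\<forall>e\<in>E. a e > 0"
    and eqm: "\<forall>j\<in>V. (\<Sum>k\<in>{k. (j, k) \<in> E}. a (j, k) *\<^sub>R (\<rho> (j, k) *v xs k - xs j)) = 0"
    and ij: "i \<in> V" "j \<in> V" "sw i j (mat 1)"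
  shows "xs i = xs j"
proof -
  have key: "g *v xs k = xs r" if "sw r k g" for k g
  proof -
    define d where "d = g *v xs k - xs r"
    have "d \<bullet> (g *v xs k) \<le> d \<bullet> xs r" by (rule max_principle[OF r loc apos eqm that])
    hence "d \<bullet> d \<le> 0" unfolding d_def by (simp add: inner_diff_right)
    hence "d \<bullet> d = 0" using inner_ge_zero[of d] by linarith
    hence "d = 0" by simp
    thus ?thesis unfolding d_def by simp
  qed
  have rV: "r \<in> V" using r unfolding is_root_def by auto
  obtain g where g: "sw r i g" using conn[OF rt rV ij(1)] by blast
  have gj: "sw r j g" using sw_app[OF ij(3) g] by simp
  have "g *v xs i = g *v xs j" using key g gj by simp
  hence "transpose g *v (g *v xs i) = transpose g *v (g *v xs j)" by simp
  thus ?thesis using orth_tt[OF sw_orth[OF g]] by (simp add: matrix_vector_mul_assoc)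
qed

end
lemma deriv_lim0:
  fixes f f' :: "real \<Rightarrow> 'a::real_inner"
  assumes d: "\<forall>t\<ge>0. (f has_vector_derivative f' t) (at t within {0..})"
    and l: "(f \<longlongrightarrow> l) at_top" and l': "(f' \<longlongrightarrow> l') at_top"
  shows "l' = 0"
proof (rule ccontr)
  assume nz: "l' \<noteq> 0"
  define c where "c = l' \<bullet> l'"
  have cpos: "c > 0" using nz by (simp add: c_def)
  define \<phi> where "\<phi> t = l' \<bullet> f t" for t
  have d\<phi>: "(\<phi> has_real_derivative (l' \<bullet> f' t)) (at t)" if "t > 0" for t
  proof -
    have "(f has_vector_derivative f' t) (at t within {0..})" using d that by simp
    moreover have "{0<..} \<subseteq> {0::real..}" by auto
    ultimately have "(f has_vector_derivative f' t) (at t within {0<..})"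
      by (rule has_vector_derivative_within_subset)
    hence "(f has_vector_derivative f' t) (at t)" using has_vector_derivative_within_open[of t "{0<..}"] that open_greaterThan by auto
    hence "(f has_derivative (\<lambda>h. h *\<^sub>R f' t)) (at t)" by (simp add: has_vector_derivative_def)
    hence "(\<phi> has_derivative (\<lambda>h. l' \<bullet> (h *\<^sub>R f' t))) (at t)" unfolding \<phi>_def by (rule has_derivative_inner_right)
    moreover have "(\<lambda>h. l' \<bullet> (h *\<^sub>R f' t)) = (*) (l' \<bullet> f' t)" by (auto simp: mult.commute)
    ultimately show ?thesis by (simp add: has_field_derivative_def)
  qed
  have "((\<lambda>t. l' \<bullet> f' t) \<longlongrightarrow> c) at_top" unfolding c_def by (intro tendsto_intros l')
  hence "eventually (\<lambda>t. c/2 < l' \<bullet> f' t) at_top" using cpos by (intro order_tendstoD(1)) auto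
  then obtain T0 where T0: "\<forall>t\<ge>T0. c/2 < l' \<bullet> f' t" by (auto simp: eventually_at_top_linorder)
  define T where "T = max T0 1"
  have Tpos: "T > 0" unfolding T_def by auto
  have grow: "\<phi> T + c/2*(t - T) \<le> \<phi> t" if "t \<ge> T" for t
  proof -
    let ?\<psi> = "\<lambda>s. \<phi> s - c/2 * s"
    have "?\<psi> T \<le> ?\<psi> t"
    proof (rule DERIV_nonneg_imp_increasing_open[OF that])
      fix x assume x: "T < x" "x < t"
      have "DERIV (\<lambda>s. c/2 * s) x :> c/2 * 1" by (rule DERIV_cmult[OF DERIV_ident])
      hence "DERIV ?\<psi> x :> (l' \<bullet> f' x - c/2 * 1)"
        using x Tpos by (intro DERIV_diff d\<phi>) auto
      moreover have "l' \<bullet> f' x - c/2 * 1 \<ge> 0"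
      proof -
        have "x \<ge> T0" using x unfolding T_def by auto
        thus ?thesis using T0 by fastforce
      qed
      ultimately show "\<exists>y. DERIV ?\<psi> x :> y \<and> y \<ge> 0" by blast
    next
      have "continuous_on {T..t} \<phi>"
      proof (intro continuous_at_imp_continuous_on ballI)
        fix s assume "s \<in> {T..t}"
        hence "s > 0" using Tpos by auto
        thus "isCont \<phi> s" using d\<phi> DERIV_isCont by blast
      qed
      thus "continuous_on {T..t} ?\<psi>" by (intro continuous_intros)
    qed
    thus ?thesis by (simp add: field_simps)
  qed
  have lim: "(\<phi> \<longlongrightarrow> l' \<bullet> l) at_top" unfolding \<phi>_def by (intro tendsto_intros l)
  hence "eventually (\<lambda>t. \<phi> t < l' \<bullet> l + 1) at_top" by (intro order_tendstoD(2)) auto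
  then obtain T1 where T1: "\<forall>t\<ge>T1. \<phi> t < l' \<bullet> l + 1" by (auto simp: eventually_at_top_linorder)
  define K where "K = \<bar>l' \<bullet> l + 1 - \<phi> T\<bar>"
  define t where "t = max T T1 + 2*K/c"
  have K0: "K \<ge> 0" unfolding K_def by simp
  have q: "2*K/c \<ge> 0" using K0 cpos by simp
  have tT1: "t \<ge> T" unfolding t_def using q max.cobounded1[of T T1] by linarith
  have tT2: "t \<ge> T1" unfolding t_def using q max.cobounded2[of T T1] by linarith
  note tT = tT1 tT2
  have "t - T \<ge> 2*K/c" unfolding t_def by auto
  hence "c/2*(t - T) \<ge> c/2 * (2*K/c)" using cpos by (intro mult_left_mono) auto
  also have "c/2 * (2*K/c) = K" using cpos by (simp add: field_simps)
  finally have "\<phi> t \<ge> \<phi> T + K" using grow[OF tT(1)] by linarith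
  moreover have "\<phi> T + K \<ge> l' \<bullet> l + 1" unfolding K_def by linarith
  moreover have "\<phi> t < l' \<bullet> l + 1" using T1 tT(2) by blast
  ultimately show False by linarith
qed


theorem corollary4:
  fixes V :: "'v set" and E :: "('v \<times> 'v) set"
    and \<rho> :: "'v \<times> 'v \<Rightarrow> real^'k^'k" and G :: "(real^'k^'k) set"
  assumes vg: "voltage_graph V E \<rho> G"
    and pg: "point_group G"
    and rt: "rooted V E"
    and loc: "\<exists>r. is_root V E r \<and> local_group V E \<rho> r = directed_local_group V E \<rho> r"
  shows
   "(\<forall>i\<in>V.
       (\<forall>j\<in>V. \<forall>k\<in>V. (\<exists>P\<in>adapted_partition V E \<rho>. j \<in> P \<and> k \<in> P)
                        \<longleftrightarrow> Net V E \<rho> i j = Net V E \<rho> i k)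
     \<and> real (card (adapted_partition V E \<rho>))
         = real (card (NetV V E \<rho> i)) / real (card (local_group V E \<rho> i))
     \<and> real (card (adapted_partition V E \<rho>))
         \<le> real (card G) / real (card (local_group V E \<rho> i))
     \<and> (real (card (adapted_partition V E \<rho>))
          = real (card G) / real (card (local_group V E \<rho> i))
        \<longleftrightarrow> nondegenerate V E \<rho> G))
    \<and>
    (\<forall>(a :: 'v \<times> 'v \<Rightarrow> real) (x :: real \<Rightarrow> 'v \<Rightarrow> real^'k) (xs :: 'v \<Rightarrow> real^'k).
       (\<forall>e\<in>E. a e > 0) \<longrightarrow>
       (\<forall>t\<ge>0. \<forall>i\<in>V. ((\<lambda>s. x s i) has_vector_derivative
            (\<Sum>j\<in>{j. (i, j) \<in> E}. a (i, j) *\<^sub>R (\<rho> (i, j) *v x t j - x t i))) (at t within {0..})) \<longrightarrow>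
       (\<forall>i\<in>V. ((\<lambda>t. x t i) \<longlongrightarrow> xs i) at_top) \<longrightarrow>
       (\<forall>i\<in>V. \<forall>j\<in>V. (\<exists>P\<in>adapted_partition V E \<rho>. i \<in> P \<and> j \<in> P) \<longrightarrow> xs i = xs j))"
proof -
  interpret VG V E \<rho> G using vg pg by unfold_locales
  obtain r where r: "is_root V E r" and locr: "local_group V E \<rho> r = directed_local_group V E \<rho> r"
    using loc by blast
  have P1: "(\<forall>j\<in>V. \<forall>k\<in>V. (\<exists>P\<in>adapted_partition V E \<rho>. j \<in> P \<and> k \<in> P)
                        \<longleftrightarrow> Net V E \<rho> i j = Net V E \<rho> i k)
     \<and> real (card (adapted_partition V E \<rho>))
         = real (card (NetV V E \<rho> i)) / real (card (local_group V E \<rho> i))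
     \<and> real (card (adapted_partition V E \<rho>))
         \<le> real (card G) / real (card (local_group V E \<rho> i))
     \<and> (real (card (adapted_partition V E \<rho>))
          = real (card G) / real (card (local_group V E \<rho> i))
        \<longleftrightarrow> nondegenerate V E \<rho> G)" if iV: "i \<in> V" for i
  proof (intro conjI)
    show "\<forall>j\<in>V. \<forall>k\<in>V. (\<exists>P\<in>adapted_partition V E \<rho>. j \<in> P \<and> k \<in> P)
                        \<longleftrightarrow> Net V E \<rho> i j = Net V E \<rho> i k"
    proof (intro ballI)
      fix j k assume jk: "j \<in> V" "k \<in> V"
      show "(\<exists>P\<in>adapted_partition V E \<rho>. j \<in> P \<and> k \<in> P) \<longleftrightarrow> Net V E \<rho> i j = Net V E \<rho> i k"
        using part_iff[OF jk] net_eq[OF rt iV jk] by simp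
    qed
    define m where "m = card (adapted_partition V E \<rho>)"
    define c where "c = card (local_group V E \<rho> i)"
    have cpos: "real c > 0" using LG_pos[OF iV] unfolding c_def by simp
    have cN: "card (NetV V E \<rho> i) = m * c" unfolding m_def c_def by (rule card_NetV[OF rt iV])
    show eq1: "real m = real (card (NetV V E \<rho> i)) / real c"
      using cN cpos by (simp add: field_simps)
    have le: "card (NetV V E \<rho> i) \<le> card G" by (rule card_mono[OF finG NetV_G])
    show "real m \<le> real (card G) / real c"
      unfolding eq1 using le cpos by (intro divide_right_mono) auto
    have "real m = real (card G) / real c \<longleftrightarrow> card (NetV V E \<rho> i) = card G"
      unfolding eq1 using cpos by (simp add: divide_cancel_right)
    also have "\<dots> \<longleftrightarrow> nondegenerate V E \<rho> G"
    proof
      assume "card (NetV V E \<rho> i) = card G"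
      hence "NetV V E \<rho> i = G" using card_subset_eq[OF finG NetV_G] by blast
      thus "nondegenerate V E \<rho> G" unfolding nondegenerate_def using iV by blast
    next
      assume "nondegenerate V E \<rho> G"
      then obtain i' where "i' \<in> V" "NetV V E \<rho> i' = G" unfolding nondegenerate_def by blast
      thus "card (NetV V E \<rho> i) = card G" using card_NetV_eq[OF rt iV, of i'] by simp
    qed
    finally show "real m = real (card G) / real c \<longleftrightarrow> nondegenerate V E \<rho> G" .
  qed
  have P2: "xs i = xs j"
    if apos: "\<forall>e\<in>E. a e > 0"
    and dx: "\<forall>t\<ge>0. \<forall>i\<in>V. ((\<lambda>s. x s i) has_vector_derivative
            (\<Sum>j\<in>{j. (i, j) \<in> E}. a (i, j) *\<^sub>R (\<rho> (i, j) *v x t j - x t i))) (at t within {0..})"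
    and lim: "\<forall>i\<in>V. ((\<lambda>t. x t i) \<longlongrightarrow> xs i) at_top"
    and ij: "i \<in> V" "j \<in> V" "\<exists>P\<in>adapted_partition V E \<rho>. i \<in> P \<and> j \<in> P"
    for a :: "'v \<times> 'v \<Rightarrow> real" and x :: "real \<Rightarrow> 'v \<Rightarrow> real^'k" and xs i j
  proof -
    have eqm: "\<forall>j\<in>V. (\<Sum>k\<in>{k. (j, k) \<in> E}. a (j, k) *\<^sub>R (\<rho> (j, k) *v xs k - xs j)) = 0"
    proof
      fix j assume jV: "j \<in> V"
      have t1: "((\<lambda>t. x t k) \<longlongrightarrow> xs k) at_top" if "k \<in> {k. (j, k) \<in> E}" for k
        using lim that E_sub by auto
      have tend: "((\<lambda>t. \<Sum>k\<in>{k. (j, k) \<in> E}. a (j, k) *\<^sub>R (\<rho> (j, k) *v x t k - x t j)) \<longlongrightarrow>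
             (\<Sum>k\<in>{k. (j, k) \<in> E}. a (j, k) *\<^sub>R (\<rho> (j, k) *v xs k - xs j))) at_top"
      proof (intro tendsto_sum tendsto_scaleR tendsto_const tendsto_diff)
        fix k assume k: "k \<in> {k. (j, k) \<in> E}"
        show "((\<lambda>t. \<rho> (j, k) *v x t k) \<longlongrightarrow> \<rho> (j, k) *v xs k) at_top"
          by (rule isCont_tendsto_compose[OF matrix_vector_mult_linear_continuous_at t1[OF k]])
        show "((\<lambda>t. x t j) \<longlongrightarrow> xs j) at_top" using lim jV by auto
      qed
      have der: "\<forall>t\<ge>0. ((\<lambda>s. x s j) has_vector_derivative
            (\<Sum>k\<in>{k. (j, k) \<in> E}. a (j, k) *\<^sub>R (\<rho> (j, k) *v x t k - x t j))) (at t within {0..})"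
        using dx jV by auto
      have limj: "((\<lambda>t. x t j) \<longlongrightarrow> xs j) at_top" using lim jV by auto
      show "(\<Sum>k\<in>{k. (j, k) \<in> E}. a (j, k) *\<^sub>R (\<rho> (j, k) *v xs k - xs j)) = 0"
        by (rule deriv_lim0[OF der limj tend])
    qed
    have "semiwalk_net V E \<rho> i j (mat 1)" using part_iff ij by blast
    thus ?thesis by (rule equil_eq[OF rt r locr apos eqm ij(1,2)])
  qed
  show ?thesis
    apply (rule conjI)
     apply (intro ballI, rule P1, assumption)
    apply (intro allI impI ballI)
    apply (rule P2; assumption)
    done
qed

end
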